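(* Under Conditions 1 and 2, there exist constants $T_0>0$ and $n_0\ge1$ such that for all $n\ge n_0$ and all $u\in\mathbb R$ with $|u|<1/T_0$, $$\Big|\int_0^\infty\sin(ut)\,\bar\Lambda^{(n)}_\beta(t)\,dt\Big|\ge\frac3{16}\sigma|u| .$$
   Context: Notation: $\mathbb Z_+=\{1,2,\dots\}$, $\mathbb R_+=[0,\infty)$. For each $n\ge1$: $\lambda^{(n)}>0$; a probability $\Lambda^{(n)}$ on $\mathbb R_+$ with tail $\bar\Lambda^{(n)}(t)=\Lambda^{(n)}((t,\infty))$, $\eta^{(n)}=\int_0^\infty y\Lambda^{(n)}(dy)$, $\sigma^{(n)}=\frac12\int_0^\infty y^2\Lambda^{(n)}(dy)$ finite; probability laws $(p_k^{(n)})_{k\ge1}$, $(q_k^{(n)})_{k\ge1}$ on $\mathbb Z_+$ with generating functions $g^{(n)},h^{(n)}$, $m^{(n)}=\sum_kkp_k^{(n)}<\infty$; $\gamma_n>0$ with $\gamma_n\to\infty$, $\gamma_n/n\to\gamma_*\in[0,\infty)$. $\phi^{(n)}(z)=n\gamma_n[g^{(n)}(1-z/n)-(1-z/n)]$, $\psi^{(n)}(z)=\gamma_n[1-h^{(n)}(1-z/n)]$ for $z\in[0,n]$. Condition 1: (i) $\lambda^{(n)}\to\lambda>0$, $\eta^{(n)}\to\eta>0$, $\sigma^{(n)}\to\sigma>0$, $\gamma_n(1-\lambda^{(n)}\eta^{(n)})\to b\in\mathbb R$; (ii) $\psi^{(n)}\to\psi$ uniformly on compacts of $[0,\infty)$;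 (iii) $\{\phi^{(n)}\}$ is uniformly Lipschitz on bounded intervals and converges uniformly on compacts to a continuous $\phi$. Under Condition 1, $\lambda\eta=1$ and $m:=\lim_n\gamma_n(1-m^{(n)})$ exists (so $\gamma_n(1-\lambda^{(n)}\eta^{(n)}m^{(n)})\to b+m$). Condition 2 (for some $\alpha\in(1,2)$): (1) there are $C,k_0>0$ with $n\gamma_n\sum_{k\ge k_0}(k/n)^\alpha p^{(n)}_k+\sum_kk^\alpha q^{(n)}_k\le C$ for all $n$, and $\lim_{k_1\to\infty}\limsup_n\gamma_n\sum_{k\ge k_1}kp^{(n)}_k=0$; (2) there are $C_0>0$ and a probability $\Lambda^*$ on $\mathbb R_+$ with $\int t^{2\alpha}\Lambda^*(dt)<\infty$ and $\bar\Lambda^{(n)}\le C_0\bar\Lambda^*$ for all $n$. Fix $\beta\in[0,\infty)$ with $\beta>-(b+m)/(\sigma\lambda)$. Define $\bar\Lambda_\beta^{(n)}(t)=e^{-\beta t/\gamma_n}\bar\Lambda^{(n)}(t)$. *)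

theory Defs
  imports "HOL-Probability.Probability"
begin

definition pgf :: "(nat \<Rightarrow> real) \<Rightarrow> real \<Rightarrow> real" where
  "pgf p s = (\<Sum>k. p k * s ^ k)"

definition tail :: "real measure \<Rightarrow> real \<Rightarrow> real" where
  "tail M t = measure M {t<..}"

definition phiN :: "(nat \<Rightarrow> real) \<Rightarrow> (nat \<Rightarrow> nat \<Rightarrow> real) \<Rightarrow> nat \<Rightarrow> real \<Rightarrow> real" where
  "phiN gam p n z = real n * gam n * (pgf (p n) (1 - z / real n) - (1 - z / real n))"

definition psiN :: "(nat \<Rightarrow> real) \<Rightarrow> (nat \<Rightarrow> nat \<Rightarrow> real) \<Rightarrow> nat \<Rightarrow> real \<Rightarrow> real" where
  "psiN gam q n z = gam n * (1 - pgf (q n) (1 - z / real n))"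

end

theory Submission
  imports Defs "HOL-Probability.Probability"
begin


lemma inner_powr:
  fixes r y :: real assumes r: "r > 0"
  shows "(\<integral>\<^sup>+ t. ennreal (indicator {0..} t * t powr r) * indicator {t<..} y \<partial>lborel)
       = ennreal (max y 0 powr (r+1) / (r+1))"
proof -
  have "(\<integral>\<^sup>+ t. ennreal (indicator {0..} t * t powr r) * indicator {t<..} y \<partial>lborel)
      = (\<integral>\<^sup>+ t. ennreal (indicator {0..max y 0} t * t powr r) \<partial>lborel)"
  proof (rule nn_integral_cong_AE)
    show "AE t in lborel. ennreal (indicator {0..} t * t powr r) * indicator {t<..} y =
         ennreal (indicator {0..max y 0} t * t powr r)"
      using AE_lborel_singleton[of y] AE_lborel_singleton[of 0]
      by eventually_elim (auto simp: indicator_def)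
  qed
  also have "\<dots> = ennreal (max y 0 powr (r+1) / (r+1))"
    using nn_integral_has_integral_lebesgue[OF _ has_integral_powr_from_0[of r "max y 0"]] r
    by auto
  finally show ?thesis .
qed

lemma layer_cake:
  fixes M :: "real measure" and r :: real
  assumes P: "prob_space M" and S: "sets M = sets borel" and r: "r > 0"
  shows "(\<integral>\<^sup>+ t. ennreal (indicator {0..} t * t powr r * measure M {t<..}) \<partial>lborel)
       = (\<integral>\<^sup>+ y. ennreal (max y 0 powr (r+1) / (r+1)) \<partial>M)"
proof -
  interpret prob_space M by (rule P)
  interpret pair_sigma_finite lborel M
    by (simp add: pair_sigma_finite_def lborel.sigma_finite_measure_axioms sigma_finite_measure_axioms)
  have em: "ennreal (measure M {t<..}) = (\<integral>\<^sup>+ y. indicator {t<..} y \<partial>M)" for t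
    using S by (simp add: emeasure_eq_measure[symmetric])
  have "(\<integral>\<^sup>+ t. ennreal (indicator {0..} t * t powr r * measure M {t<..}) \<partial>lborel)
     = (\<integral>\<^sup>+ t. (\<integral>\<^sup>+ y. ennreal (indicator {0..} t * t powr r) * indicator {t<..} y \<partial>M) \<partial>lborel)"
    apply (rule nn_integral_cong)
    apply (subst nn_integral_cmult)
    using S apply simp
    apply (subst em[symmetric])
    by (simp add: ennreal_mult'')
  also have "\<dots> = (\<integral>\<^sup>+ y. (\<integral>\<^sup>+ t. ennreal (indicator {0..} t * t powr r) * indicator {t<..} y \<partial>lborel) \<partial>M)"
  proof (rule Fubini'[symmetric])
    have "(\<lambda>x. ennreal (indicator {0..} (fst x) * fst x powr r) * indicator {x. fst x < snd x} x)
       \<in> borel_measurable (lborel \<Otimes>\<^sub>M borel)"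
      by measurable
    then show "case_prod (\<lambda>t y. ennreal (indicator {0..} t * t powr r) * indicator {t<..} y)
        \<in> borel_measurable (lborel \<Otimes>\<^sub>M M)"
      using S by (simp add: split_beta' indicator_def cong: measurable_cong_sets[OF sets_pair_measure_cong[OF refl S] refl])
  qed
  also have "\<dots> = (\<integral>\<^sup>+ y. ennreal (max y 0 powr (r+1) / (r+1)) \<partial>M)"
    using inner_powr[OF r] by simp
  finally show ?thesis .
qed

lemma tail_meas: "(\<lambda>t. tail M t) \<in> borel_measurable borel" if "finite_measure M" "sets M = sets borel"
proof -
  interpret finite_measure M by (rule that)
  have "mono (\<lambda>t. - tail M t)"
  proof (rule monoI)
    fix x y :: real assume "x \<le> y"
    then have "{y<..} \<subseteq> {x<..}" by auto
    moreover have "{x<..} \<in> sets M" using that(2) by simp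
    ultimately have "measure M {y<..} \<le> measure M {x<..}" by (rule finite_measure_mono)
    then show "- tail M x \<le> - tail M y" by (simp add: tail_def)
  qed
  then have "(\<lambda>t. - (- tail M t)) \<in> borel_measurable borel"
    by (intro borel_measurable_uminus borel_measurable_mono)
  then show ?thesis by simp
qed
lemma tail_nonneg: "tail M t \<ge> 0" by (simp add: tail_def)

lemma AE_nonneg:
  assumes P: "prob_space M" and S: "sets M = sets borel" and Z: "measure M {..<0} = 0"
  shows "AE y in M. (0::real) \<le> y"
proof -
  interpret prob_space M by (rule P)
  have "{..<0::real} \<in> null_sets M"
    using Z S by (simp add: null_sets_def emeasure_eq_measure)
  then show ?thesis
    by (rule AE_I') auto
qed

lemma second_moment_tail:
  fixes M :: "real measure"
  assumes P: "prob_space M" and S: "sets M = sets borel" and Z: "measure M {..<0} = 0"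
    and I: "integrable M (\<lambda>y. y ^ 2)"
  shows "set_integrable lborel {0..} (\<lambda>t. t * tail M t)"
    "(LBINT t:{0..}. t * tail M t) = (1/2) * integral\<^sup>L M (\<lambda>y. y ^ 2)"
proof -
  interpret prob_space M by (rule P)
  have meas[measurable]: "(\<lambda>t. tail M t) \<in> borel_measurable borel"
    using tail_meas S finite_measure_axioms by blast
  have "(\<integral>\<^sup>+ t. ennreal (indicator {0..} t * t * tail M t) \<partial>lborel)
      = (\<integral>\<^sup>+ t. ennreal (indicator {0..} t * t powr 1 * measure M {t<..}) \<partial>lborel)"
    by (intro nn_integral_cong) (auto simp: indicator_def tail_def)
  also have "\<dots> = (\<integral>\<^sup>+ y. ennreal (max y 0 powr (1+1) / (1+1)) \<partial>M)"
    by (rule layer_cake[OF P S]) simp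
  also have "\<dots> = (\<integral>\<^sup>+ y. ennreal ((1/2) * y ^ 2) \<partial>M)"
    apply (rule nn_integral_cong_AE)
    using AE_nonneg[OF P S Z] by eventually_elim (simp add: max_def)
  also have "\<dots> = ennreal ((1/2) * integral\<^sup>L M (\<lambda>y. y ^ 2))"
    using I by (subst nn_integral_eq_integral) auto
  finally have N: "(\<integral>\<^sup>+ t. ennreal (indicator {0..} t * t * tail M t) \<partial>lborel) = ennreal ((1/2) * integral\<^sup>L M (\<lambda>y. y ^ 2))" .
  have N': "(\<integral>\<^sup>+ t. ennreal (indicator {0..} t *\<^sub>R (t * tail M t)) \<partial>lborel) = ennreal ((1/2) * integral\<^sup>L M (\<lambda>y. y ^ 2))"
    using N by (simp add: mult.assoc)
  show "set_integrable lborel {0..} (\<lambda>t. t * tail M t)"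
    unfolding set_integrable_def
    by (rule integrableI_nn_integral_finite[OF _ _ N']) (auto simp: indicator_def tail_nonneg)
  have "(LBINT t:{0..}. t * tail M t) = enn2real (\<integral>\<^sup>+ t. ennreal (indicator {0..} t *\<^sub>R (t * tail M t)) \<partial>lborel)"
    unfolding set_lebesgue_integral_def
    by (rule integral_eq_nn_integral) (auto simp: indicator_def tail_nonneg)
  also have "\<dots> = (1/2) * integral\<^sup>L M (\<lambda>y. y ^ 2)"
    using N' by simp
  finally show "(LBINT t:{0..}. t * tail M t) = (1/2) * integral\<^sup>L M (\<lambda>y. y ^ 2)" .
qed


lemma moment_fin:
  fixes L :: "real measure" and s a :: real
  assumes P: "prob_space L" and S: "sets L = sets borel" and I: "integrable L (\<lambda>t. t powr a)"
    and s: "0 < s" "s + 1 \<le> a"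
  shows "(\<integral>\<^sup>+ y. ennreal (max y 0 powr (s+1) / (s+1)) \<partial>L) < \<infinity>"
proof -
  interpret prob_space L by (rule P)
  have pw: "max y 0 powr (s+1) / (s+1) \<le> 1 + norm (y powr a)" for y :: real
  proof (cases "y \<le> 0")
    case True then show ?thesis by (simp add: max_def)
  next
    case False
    then have y: "y > 0" by simp
    have "max y 0 powr (s+1) / (s+1) \<le> y powr (s+1)"
      using y s by (simp add: max_def divide_le_eq)
    also have "\<dots> \<le> 1 + norm (y powr a)"
    proof (cases "y \<le> 1")
      case True
      then have "y powr (s+1) \<le> 1" using y s by (intro powr_le1) auto
      moreover have "0 \<le> y powr a" by simp
      ultimately show ?thesis by (simp only: real_norm_def)
    next
      case False
      then have "y powr (s+1) \<le> y powr a" using s by (intro powr_mono) auto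
      then show ?thesis by simp
    qed
    finally show ?thesis .
  qed
  have "(\<integral>\<^sup>+ y. ennreal (max y 0 powr (s+1) / (s+1)) \<partial>L) \<le> (\<integral>\<^sup>+ y. ennreal (1 + norm (y powr a)) \<partial>L)"
    by (intro nn_integral_mono ennreal_leI pw)
  also have "\<dots> = (\<integral>\<^sup>+ y. 1 \<partial>L) + (\<integral>\<^sup>+ y. ennreal (norm (y powr a)) \<partial>L)"
    using S by (subst nn_integral_add[symmetric]) (auto)
  also have "\<dots> < \<infinity>"
    using I unfolding integrable_iff_bounded by (simp add: emeasure_space_1)
  finally show ?thesis .
qed

lemma frac_moment_tail:
  fixes M L :: "real measure" and s C0 K :: real
  assumes P: "prob_space M" and S: "sets M = sets borel"
    and PL: "prob_space L" and SL: "sets L = sets borel" and s: "0 < s" and C0: "C0 \<ge> 0"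
    and tb: "\<And>t. t \<ge> 0 \<Longrightarrow> tail M t \<le> C0 * tail L t"
    and K: "(\<integral>\<^sup>+ y. ennreal (max y 0 powr (s+1) / (s+1)) \<partial>L) = ennreal K" "K \<ge> 0"
  shows "set_integrable lborel {0..} (\<lambda>t. t powr s * tail M t)"
    "(LBINT t:{0..}. t powr s * tail M t) \<le> C0 * K"
proof -
  interpret prob_space M by (rule P)
  have meas[measurable]: "(\<lambda>t. tail M t) \<in> borel_measurable borel"
    using tail_meas S finite_measure_axioms by blast
  interpret L: prob_space L by (rule PL)
  have [measurable]: "(\<lambda>t. measure L {t<..}) \<in> borel_measurable borel"
    using tail_meas[OF L.finite_measure_axioms SL] unfolding tail_def by simp
  define N where "N = (\<integral>\<^sup>+ t. ennreal (indicator {0..} t *\<^sub>R (t powr s * tail M t)) \<partial>lborel)"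
  have "N \<le> (\<integral>\<^sup>+ t. ennreal C0 * ennreal (indicator {0..} t * t powr s * measure L {t<..}) \<partial>lborel)"
    unfolding N_def
  proof (intro nn_integral_mono)
    fix t :: real
    show "ennreal (indicator {0..} t *\<^sub>R (t powr s * tail M t))
          \<le> ennreal C0 * ennreal (indicator {0..} t * t powr s * measure L {t<..})"
    proof (cases "t \<ge> 0")
      case True
      have "t powr s * tail M t \<le> t powr s * (C0 * tail L t)"
        using tb[OF True] by (intro mult_left_mono) auto
      then show ?thesis using True C0
        by (simp add: ennreal_mult''[symmetric] tail_def mult_ac)
    qed simp
  qed
  also have "\<dots> = ennreal C0 * ennreal K"
    using layer_cake[OF PL SL s] K
    by (subst nn_integral_cmult) auto
  finally have NK: "N \<le> ennreal (C0 * K)" using C0 K by (simp add: ennreal_mult)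
  have Ntop: "N < \<infinity>" using NK by (simp add: le_less_trans)
  define x where "x = enn2real N"
  have x: "N = ennreal x" "0 \<le> x" "x \<le> C0 * K"
    using Ntop NK C0 K unfolding x_def
    by (auto simp: ennreal_enn2real intro!: enn2real_leI)
  show si: "set_integrable lborel {0..} (\<lambda>t. t powr s * tail M t)"
    unfolding set_integrable_def
    by (rule integrableI_nn_integral_finite[OF _ _ x(1)[unfolded N_def]]) (auto simp: indicator_def tail_nonneg)
  have "(LBINT t:{0..}. t powr s * tail M t) = enn2real N"
    unfolding set_lebesgue_integral_def N_def
    by (rule integral_eq_nn_integral) (auto simp: indicator_def tail_nonneg)
  then show "(LBINT t:{0..}. t powr s * tail M t) \<le> C0 * K"
    using x by simp
qed


lemma sin_quad: "sin x \<ge> x - x^2/2" for x :: real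
proof -
  have "cmod (exp (\<i> * complex_of_real x) - (\<Sum>k \<le> 1. (\<i> * x)^k / fact k)) \<le> \<bar>x\<bar>^(Suc 1) / fact (Suc 1)"
    by (rule iexp_approx1)
  moreover have "\<bar>Im (exp (\<i> * complex_of_real x) - (\<Sum>k \<le> 1. (\<i> * x)^k / fact k))\<bar>
      \<le> cmod (exp (\<i> * complex_of_real x) - (\<Sum>k \<le> 1. (\<i> * x)^k / fact k))"
    by (rule abs_Im_le_cmod)
  moreover have "Im (exp (\<i> * complex_of_real x) - (\<Sum>k \<le> 1. (\<i> * x)^k / fact k)) = sin x - x"
    by (simp add: Im_exp)
  ultimately have "\<bar>sin x - x\<bar> \<le> x^2/2" by (simp add: power2_eq_square)
  then show ?thesis by linarith
qed

lemma sin_s: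
  fixes x s :: real assumes x: "x \<ge> 0" and s: "1 \<le> s" "s \<le> 2"
  shows "sin x \<ge> x - 2 * x powr s"
proof (cases "x \<le> 1")
  case True
  have "x^2 = x powr 2" using x by simp
  also have "\<dots> \<le> x powr s" using True x s by (intro powr_mono') auto
  finally have "x^2 \<le> x powr s" .
  then show ?thesis using sin_quad[of x] zero_le_power2[of x] by linarith
next
  case False
  have "x powr 1 \<le> x powr s" using False s by (intro powr_mono) auto
  then have "x \<le> x powr s" using x by simp
  then show ?thesis using sin_ge_minus_one[of x] False by linarith
qed

lemma exp_s:
  fixes y s :: real assumes y: "y \<ge> 0" and s: "1 < s" "s \<le> 2"
  shows "1 - exp (- y) \<le> y powr (s - 1)"
proof (cases "y \<le> 1")
  case True
  have "1 - exp (-y) \<le> y" using exp_ge_add_one_self[of "-y"] by linarith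
  also have "y = y powr 1" using y by simp
  also have "\<dots> \<le> y powr (s - 1)" using True y s by (intro powr_mono') auto
  finally show ?thesis .
next
  case False
  have "1 - exp (-y) \<le> 1" by simp
  also have "1 \<le> y powr (s - 1)" using False s by (intro ge_one_powr_ge_zero) auto
  finally show ?thesis .
qed

lemma point_bound:
  fixes u t c s :: real
  assumes u: "u > 0" and t: "t \<ge> 0" and c: "c \<ge> 0" and s: "1 < s" "s \<le> 2"
  shows "sin (u * t) * exp (- c * t) \<ge> u * t - (2 * u powr s + u * c powr (s - 1)) * t powr s"
proof -
  define x where "x = u * t"
  define e where "e = exp (- c * t)"
  have x0: "x \<ge> 0" using u t by (simp add: x_def)
  have e1: "e \<le> 1" "e > 0" using c t by (auto simp: e_def mult_nonneg_nonneg)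
  have "sin x * e \<ge> sin x - x * (1 - e)"
  proof (cases "sin x \<ge> 0")
    case True
    have "sin x * (1 - e) \<le> x * (1 - e)" using sin_x_le_x[OF x0] e1 by (intro mult_right_mono) auto
    then show ?thesis by (simp add: algebra_simps)
  next
    case False
    have "sin x * e \<ge> sin x" using False e1 by (simp add: mult_le_cancel_left1)
    moreover have "x * (1 - e) \<ge> 0" using x0 e1 by simp
    ultimately show ?thesis by linarith
  qed
  moreover have "sin x \<ge> x - 2 * x powr s" using sin_s[OF x0] s by simp
  moreover have "x * (1 - e) \<le> x * (c * t) powr (s - 1)"
    using exp_s[of "c * t" s] c t s x0 by (intro mult_left_mono) (auto simp: e_def)
  ultimately have A: "sin x * e \<ge> x - 2 * x powr s - x * (c * t) powr (s - 1)" by linarith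
  have B: "x powr s = u powr s * t powr s" using u t by (simp add: x_def powr_mult)
  have C: "x * (c * t) powr (s - 1) = u * c powr (s - 1) * t powr s"
  proof (cases "t = 0")
    case True then show ?thesis by (simp add: x_def)
  next
    case False
    then have "t * t powr (s - 1) = t powr s" using t by (simp add: powr_mult_base)
    then show ?thesis using c t by (simp add: x_def powr_mult mult_ac)
  qed
  have A': "x - 2 * (u powr s * t powr s) - u * c powr (s - 1) * t powr s \<le> sin x * e"
    using A unfolding B C .
  show ?thesis using A' unfolding x_def e_def by (simp add: algebra_simps)
qed


lemma tail_meas': "(\<lambda>t. tail M t) \<in> borel_measurable borel" if "prob_space M" "sets M = sets borel"
  using tail_meas[of M] that by (simp add: prob_space_def)

lemma set_integral_neg: "(LBINT t:A. - f t) = - (LBINT t:A. (f t::real))"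
  unfolding set_lebesgue_integral_def by (simp add: integral_minus)

theorem proposition5p8:
  fixes lam :: "nat \<Rightarrow> real" and Lam :: "nat \<Rightarrow> real measure"
    and p q :: "nat \<Rightarrow> nat \<Rightarrow> real" and gam :: "nat \<Rightarrow> real"
    and gstar lam0 eta0 sigma0 b alpha beta :: real
    and phi psi :: "real \<Rightarrow> real"
  defines "eta \<equiv> \<lambda>n. integral\<^sup>L (Lam n) (\<lambda>y. y)"
      and "sig \<equiv> \<lambda>n. (1/2) * integral\<^sup>L (Lam n) (\<lambda>y. y ^ 2)"
      and "mm \<equiv> \<lambda>n. (\<Sum>k. real k * p n k)"
  assumes
    \<comment> \<open>standing assumptions (for every n \<ge> 1)\<close>
        lam_pos: "\<And>n. n \<ge> 1 \<Longrightarrow> lam n > 0"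
    and Lam_prob: "\<And>n. n \<ge> 1 \<Longrightarrow> prob_space (Lam n)"
    and Lam_sets: "\<And>n. n \<ge> 1 \<Longrightarrow> sets (Lam n) = sets borel"
    and Lam_supp: "\<And>n. n \<ge> 1 \<Longrightarrow> measure (Lam n) {..<0} = 0"
    and Lam_int1: "\<And>n. n \<ge> 1 \<Longrightarrow> integrable (Lam n) (\<lambda>y. y)"
    and Lam_int2: "\<And>n. n \<ge> 1 \<Longrightarrow> integrable (Lam n) (\<lambda>y. y ^ 2)"
    and p_nonneg: "\<And>n k. n \<ge> 1 \<Longrightarrow> p n k \<ge> 0"
    and p_zero: "\<And>n. n \<ge> 1 \<Longrightarrow> p n 0 = 0"
    and p_sum: "\<And>n. n \<ge> 1 \<Longrightarrow> p n sums 1"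
    and q_nonneg: "\<And>n k. n \<ge> 1 \<Longrightarrow> q n k \<ge> 0"
    and q_zero: "\<And>n. n \<ge> 1 \<Longrightarrow> q n 0 = 0"
    and q_sum: "\<And>n. n \<ge> 1 \<Longrightarrow> q n sums 1"
    and m_fin: "\<And>n. n \<ge> 1 \<Longrightarrow> summable (\<lambda>k. real k * p n k)"
    and gam_pos: "\<And>n. n \<ge> 1 \<Longrightarrow> gam n > 0"
    and gam_inf: "filterlim gam at_top sequentially"
    and gam_ratio: "(\<lambda>n. gam n / real n) \<longlonglongrightarrow> gstar"
    and gstar_nonneg: "gstar \<ge> 0"
    \<comment> \<open>Condition 1 (i)\<close>
    and C1_lam: "lam \<longlonglongrightarrow> lam0" "lam0 > 0"
    and C1_eta: "eta \<longlonglongrightarrow> eta0" "eta0 > 0"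
    and C1_sigma: "sig \<longlonglongrightarrow> sigma0" "sigma0 > 0"
    and C1_b: "(\<lambda>n. gam n * (1 - lam n * eta n)) \<longlonglongrightarrow> b"
    \<comment> \<open>Condition 1 (ii): psi^(n) \<rightarrow> psi uniformly on compacts of [0,\<infinity>)\<close>
    and C1_psi: "\<And>R e. R \<ge> 0 \<Longrightarrow> e > 0 \<Longrightarrow>
        eventually (\<lambda>n. \<forall>z\<in>{0..R}. \<bar>psiN gam q n z - psi z\<bar> < e) sequentially"
    \<comment> \<open>Condition 1 (iii)\<close>
    and C1_phi_lip: "\<And>R. R \<ge> 0 \<Longrightarrow> \<exists>L. \<forall>n\<ge>1. \<forall>x\<in>{0..min R (real n)}. \<forall>y\<in>{0..min R (real n)}.
        \<bar>phiN gam p n x - phiN gam p n y\<bar> \<le> L * \<bar>x - y\<bar>"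
    and C1_phi: "\<And>R e. R \<ge> 0 \<Longrightarrow> e > 0 \<Longrightarrow>
        eventually (\<lambda>n. \<forall>z\<in>{0..R}. \<bar>phiN gam p n z - phi z\<bar> < e) sequentially"
    and C1_phi_cont: "continuous_on {0..} phi"
    \<comment> \<open>Condition 2\<close>
    and alpha: "1 < alpha" "alpha < 2"
    and C2_1a: "\<exists>C k0. C > 0 \<and> k0 > 0 \<and> (\<forall>n\<ge>1.
        summable (\<lambda>k. if real k \<ge> k0 then (real k / real n) powr alpha * p n k else 0) \<and>
        summable (\<lambda>k. real k powr alpha * q n k) \<and>
        real n * gam n * (\<Sum>k. if real k \<ge> k0 then (real k / real n) powr alpha * p n k else 0)
          + (\<Sum>k. real k powr alpha * q n k) \<le> C)"
    and C2_1b: "(\<lambda>k1. limsup (\<lambda>n. ereal (gam n * (\<Sum>k. if k \<ge> k1 then real k * p n k else 0))))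
        \<longlonglongrightarrow> 0"
    and C2_2: "\<exists>C0 Lstar. C0 > 0 \<and> prob_space Lstar \<and> sets Lstar = sets borel \<and>
        measure Lstar {..<0} = 0 \<and> integrable Lstar (\<lambda>t. t powr (2 * alpha)) \<and>
        (\<forall>n\<ge>1. \<forall>t\<ge>0. tail (Lam n) t \<le> C0 * tail Lstar t)"
    \<comment> \<open>choice of beta\<close>
    and beta: "beta \<ge> 0"
      "beta > - (b + lim (\<lambda>n. gam n * (1 - mm n))) / (sigma0 * lam0)"
  shows "\<exists>T0 > 0. \<exists>n0 \<ge> (1::nat). \<forall>n \<ge> n0. \<forall>u::real. \<bar>u\<bar> < 1 / T0 \<longrightarrow>
     \<bar>LBINT t:{0..}. sin (u * t) * (exp (- beta * t / gam n) * tail (Lam n) t)\<bar>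
       \<ge> 3 / 16 * sigma0 * \<bar>u\<bar>"
proof -
  obtain C0 Lstar where C0: "C0 > 0" and PL: "prob_space Lstar" and SL: "sets Lstar = sets borel"
    and IL: "integrable Lstar (\<lambda>t. t powr (2 * alpha))"
    and TB: "\<forall>n\<ge>1. \<forall>t\<ge>0. tail (Lam n) t \<le> C0 * tail Lstar t"
    using C2_2 by blast
  define s where "s = min (2 * alpha - 1) 2"
  have s: "1 < s" "s \<le> 2" "s + 1 \<le> 2 * alpha" using alpha by (auto simp: s_def)
  have Kfin: "(\<integral>\<^sup>+ y. ennreal (max y 0 powr (s+1) / (s+1)) \<partial>Lstar) < \<infinity>"
    using moment_fin[OF PL SL IL] s by auto
  define K where "K = enn2real (\<integral>\<^sup>+ y. ennreal (max y 0 powr (s+1) / (s+1)) \<partial>Lstar)"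
  have K: "(\<integral>\<^sup>+ y. ennreal (max y 0 powr (s+1) / (s+1)) \<partial>Lstar) = ennreal K" "K \<ge> 0"
    using Kfin by (auto simp: K_def ennreal_enn2real)
  define KK where "KK = C0 * K"
  have KK: "KK \<ge> 0" using C0 K by (simp add: KK_def)
  have sigI: "set_integrable lborel {0..} (\<lambda>t. t * tail (Lam n) t)"
     "(LBINT t:{0..}. t * tail (Lam n) t) = sig n" if n: "n \<ge> 1" for n
    using second_moment_tail[OF Lam_prob[OF n] Lam_sets[OF n] Lam_supp[OF n] Lam_int2[OF n]]
    by (simp_all add: sig_def)
  have sI: "set_integrable lborel {0..} (\<lambda>t. t powr s * tail (Lam n) t)"
     "(LBINT t:{0..}. t powr s * tail (Lam n) t) \<le> KK" if n: "n \<ge> 1" for n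
    using frac_moment_tail[OF Lam_prob[OF n] Lam_sets[OF n] PL SL _ _ _ K(1) K(2), of C0] TB n s C0
    by (auto simp: KK_def)
  have ev1: "eventually (\<lambda>n. sig n > sigma0 / 2) sequentially"
    using order_tendstoD(1)[OF C1_sigma(1), of "sigma0/2"] C1_sigma(2) by simp
  have ev2: "eventually (\<lambda>n. gam n > 0) sequentially"
    using gam_inf unfolding filterlim_at_top_dense by blast
  have "(\<lambda>n. beta / gam n) \<longlonglongrightarrow> 0"
    by (rule tendsto_divide_0[OF tendsto_const filterlim_at_top_imp_at_infinity[OF gam_inf]])
  then have "(\<lambda>n. (beta / gam n) powr (s - 1)) \<longlonglongrightarrow> 0"
    by (rule tendsto_zero_powrI[OF _ tendsto_const]) 
       (use ev2 beta s in \<open>auto elim!: eventually_mono\<close>)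
  then have "(\<lambda>n. (beta / gam n) powr (s - 1) * KK) \<longlonglongrightarrow> 0"
    by (rule tendsto_mult_left_zero)
  then have ev3: "eventually (\<lambda>n. (beta / gam n) powr (s - 1) * KK < sigma0 / 8) sequentially"
    using order_tendstoD(2)[of _ 0 sequentially "sigma0/8"] C1_sigma(2) by simp
  have "eventually (\<lambda>n. sig n > sigma0 / 2 \<and> gam n > 0 \<and> (beta / gam n) powr (s - 1) * KK < sigma0 / 8 \<and> n \<ge> 1) sequentially"
    using ev1 ev2 ev3 eventually_ge_at_top[of 1] by eventually_elim auto
  then obtain N where HN: "\<And>n. n \<ge> N \<Longrightarrow> sig n > sigma0 / 2 \<and> gam n > 0 \<and> (beta / gam n) powr (s - 1) * KK < sigma0 / 8 \<and> n \<ge> 1"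
    unfolding eventually_sequentially by blast
  define \<delta> where "\<delta> = (sigma0 / (16 * (KK + 1))) powr (1 / (s - 1))"
  have dpos: "\<delta> > 0" using C1_sigma(2) KK by (simp add: \<delta>_def)
  have small: "v powr (s - 1) * KK \<le> sigma0 / 16" if v: "0 < v" "v < \<delta>" for v
  proof -
    have "v powr (s - 1) < \<delta> powr (s - 1)" using v s by (intro powr_less_mono2) auto
    also have "\<delta> powr (s - 1) = sigma0 / (16 * (KK + 1))"
      using s C1_sigma(2) KK by (simp add: \<delta>_def powr_powr)
    finally have "v powr (s - 1) * KK \<le> sigma0 / (16 * (KK + 1)) * KK"
      using KK by (intro mult_right_mono) auto
    also have "\<dots> \<le> sigma0 / 16"
      using KK C1_sigma(2) by (simp add: field_simps)
    finally show ?thesis .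
  qed
  have main: "(LBINT t:{0..}. sin (v * t) * (exp (- beta * t / gam n) * tail (Lam n) t)) \<ge> v * sigma0 / 4"
    if n: "n \<ge> N" and v: "0 < v" "v < \<delta>" for n v
  proof -
    have n1: "n \<ge> 1" and gp: "gam n > 0" and sg: "sig n > sigma0 / 2"
      and cb: "(beta / gam n) powr (s - 1) * KK < sigma0 / 8" using HN[OF n] by auto
    define c where "c = beta / gam n"
    have c0: "c \<ge> 0" using gp beta by (simp add: c_def)
    define T where "T = tail (Lam n)"
    have Tm[measurable]: "T \<in> borel_measurable borel"
      unfolding T_def using tail_meas'[OF Lam_prob[OF n1] Lam_sets[OF n1]] by simp
    have T0: "T t \<ge> 0" for t by (simp add: T_def tail_nonneg)
    define g where "g = (\<lambda>t. v * (t * T t) - (2 * v powr s + v * c powr (s - 1)) * (t powr s * T t))"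
    define f where "f = (\<lambda>t. sin (v * t) * (exp (- beta * t / gam n) * T t))"
    have i1: "set_integrable lborel {0..} (\<lambda>t. t * T t)" using sigI(1)[OF n1] by (simp add: T_def)
    have i2: "set_integrable lborel {0..} (\<lambda>t. t powr s * T t)" using sI(1)[OF n1] by (simp add: T_def)
    have gi: "set_integrable lborel {0..} g"
      unfolding g_def using i1 i2 by (intro set_integral_diff(1) set_integrable_mult_right) auto
    have fi: "set_integrable lborel {0..} f"
    proof (rule set_integrable_bound[OF set_integrable_mult_right[OF i1, of v]])
      show "set_borel_measurable lborel {0..} f"
        unfolding set_borel_measurable_def f_def by measurable
      show "AE x in lborel. x \<in> {0..} \<longrightarrow> norm (f x) \<le> norm (v * (x * T x))"
      proof (intro AE_I2 impI)
        fix x :: real assume x: "x \<in> {0..}"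
        have "\<bar>sin (v * x)\<bar> \<le> v * x" using abs_sin_x_le_abs_x[of "v * x"] v x by simp
        moreover have "exp (- beta * x / gam n) * T x \<le> T x"
          using beta x gp T0[of x] by (intro mult_left_le_one_le) (auto simp: divide_nonpos_pos)
        ultimately have "\<bar>sin (v * x)\<bar> * (exp (- beta * x / gam n) * T x) \<le> v * x * T x"
          using T0[of x] by (intro mult_mono) auto
        then show "norm (f x) \<le> norm (v * (x * T x))"
          using v x T0[of x] by (simp add: f_def abs_mult mult_ac)
      qed
    qed
    have F1: "(LBINT t:{0..}. g t) \<le> (LBINT t:{0..}. f t)"
    proof (rule set_integral_mono[OF gi fi])
      fix t :: real assume t: "t \<in> {0..}"
      have e: "exp (- beta * t / gam n) = exp (- c * t)" by (simp add: c_def)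
      have "v * t - (2 * v powr s + v * c powr (s - 1)) * t powr s \<le> sin (v * t) * exp (- c * t)"
        using point_bound[of v t c s] v t c0 s by auto
      then have "(v * t - (2 * v powr s + v * c powr (s - 1)) * t powr s) * T t \<le> sin (v * t) * exp (- c * t) * T t"
        using T0[of t] by (intro mult_right_mono) auto
      then show "g t \<le> f t" unfolding f_def e g_def by (simp add: algebra_simps)
    qed
    have F2: "(LBINT t:{0..}. g t) = v * sig n - (2 * v powr s + v * c powr (s - 1)) * (LBINT t:{0..}. t powr s * T t)"
      unfolding g_def using i1 i2 sigI(2)[OF n1]
      by (subst set_integral_diff(2)) (auto simp: T_def)
    have F3: "(2 * v powr s + v * c powr (s - 1)) * (LBINT t:{0..}. t powr s * T t) \<le> (2 * v powr s + v * c powr (s - 1)) * KK"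
      using sI(2)[OF n1] v by (intro mult_left_mono) (auto simp: T_def)
    have vs: "v powr s = v * v powr (s - 1)"
    proof -
      have "v powr (1 + (s - 1)) = v powr 1 * v powr (s - 1)" by (rule powr_add)
      then show ?thesis using v by simp
    qed
    have F4: "(2 * v powr s + v * c powr (s - 1)) * KK = 2 * (v * (v powr (s - 1) * KK)) + v * (c powr (s - 1) * KK)"
      using vs by (simp add: algebra_simps)
    have F5: "v * (v powr (s - 1) * KK) \<le> v * (sigma0 / 16)" using small[OF v] v by simp
    have F6: "v * (c powr (s - 1) * KK) \<le> v * (sigma0 / 8)" using cb v by (simp add: c_def)
    have F7: "v * sig n \<ge> v * (sigma0 / 2)" using sg v by simp
    have "(LBINT t:{0..}. f t) \<ge> v * sigma0 / 4" using F1 F2 F3 F4 F5 F6 F7 by linarith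
    then show ?thesis unfolding f_def T_def .
  qed
  show ?thesis
  proof (intro exI[of _ "1 / \<delta>"] conjI exI[of _ "Suc N"] allI impI)
    show "1 / \<delta> > 0" using dpos by simp
    show "Suc N \<ge> 1" by simp
    fix n :: nat and u :: real
    assume n: "Suc N \<le> n" and u: "\<bar>u\<bar> < 1 / (1 / \<delta>)"
    then have nN: "n \<ge> N" and u': "\<bar>u\<bar> < \<delta>" by auto
    consider "u > 0" | "u = 0" | "u < 0" by linarith
    then show "\<bar>LBINT t:{0..}. sin (u * t) * (exp (- beta * t / gam n) * tail (Lam n) t)\<bar> \<ge> 3 / 16 * sigma0 * \<bar>u\<bar>"
    proof cases
      case 1
      have m: "(LBINT t:{0..}. sin (u * t) * (exp (- beta * t / gam n) * tail (Lam n) t)) \<ge> u * sigma0 / 4"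
        using main[OF nN 1] u' by simp
      have p: "u * sigma0 > 0" using 1 C1_sigma(2) by simp
      show ?thesis using m p 1 by (simp add: abs_of_pos mult_ac)
    next
      case 2 then show ?thesis by simp
    next
      case 3
      have "(LBINT t:{0..}. sin (u * t) * (exp (- beta * t / gam n) * tail (Lam n) t))
          = - (LBINT t:{0..}. sin ((-u) * t) * (exp (- beta * t / gam n) * tail (Lam n) t))"
        by (subst set_integral_neg[symmetric]) simp
      moreover have m: "(LBINT t:{0..}. sin ((-u) * t) * (exp (- beta * t / gam n) * tail (Lam n) t)) \<ge> (-u) * sigma0 / 4"
        using main[OF nN, of "-u"] 3 u' by simp
      moreover have p: "(-u) * sigma0 > 0" using 3 C1_sigma(2) by (simp add: mult_neg_pos)
      ultimately show ?thesis using 3 by (simp add: abs_of_neg mult_ac)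
    qed
  qed
qed
end
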